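(* In the setting described in the context, for every $j\ne i^*$ and every collection of nonnegative numbers $(G_i(\theta_b))_{i\ne i^b}$, $$\min_{\mathbf M\in\mathcal A_j}\sum_{(i,\theta_b)\in I(\mathbf M)}G_i(\theta_b)=\min_{\mathbf M\in\widetilde{\mathcal A}_j}\sum_{(i,\theta_b)\in I(\mathbf M)}G_i(\theta_b).$$
   Context: There are $k\ge2$ solutions and parameter values $\theta_1,\dots,\theta_B$ with probabilities $p_b\ge0$, $\sum_bp_b=1$. For each $b$ a unique conditional optimum $i^b\in\{1,\dots,k\}$ is given, and $i^*=\arg\max_i\sum_bp_b\mathbf 1\{i=i^b\}$ is assumed unique. Let $\mathcal M=\{\mathbf M\in\{0,1\}^{k\times B}:\mathbf M^\top\mathbf 1_k=\mathbf 1_B\}$ with entries $m_{i,b}$; $d_j(\mathbf M)=\sum_bp_bm_{i^*,b}-\sum_bp_bm_{j,b}$; $d_j=\sum_bp_b\mathbf 1\{i^*=i^b\}-\sum_bp_b\mathbf 1\{j=i^b\}$; $I(\mathbf M)=\{(i,\theta_b):m_{i,b}=1,i\ne i^b\}$; $\mathcal A_j=\{\mathbf M\in\mathcal M:d_j(\mathbf M)\le0\}$. Let $\Xi=\{(i,\theta_b):i\ne i^*,i\ne i^b\}$ and $\Xi^{\mathrm{adv}}=\{(i^*,\theta_b):i^b\ne i^*\}$. For $(i,\theta_b)\in\Xi\cup\Xi^{\mathrm{adv}}$ let $v_j[(i,\theta_b)]=p_b(\mathbf 1\{j=i\}-\mathbf 1\{j=i^b\}-\mathbf 1\{i^*=i\}+\mathbf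 1\{i^*=i^b\})$ and $v_j[(i,\theta_b)]^+=\max\{v_j[(i,\theta_b)],0\}$. Define $\widetilde{\mathcal A}_j=\{\mathbf M\in\mathcal M:d_j-\sum_{(i,\theta_b)\in\Xi\cup\Xi^{\mathrm{adv}}}v_j[(i,\theta_b)]^+m_{i,b}\le0\}$. *)

theory Defs
  imports Complex_Main
begin

text \<open>Solutions are indexed by 0,...,k-1 and parameter values theta_b by b in 0,...,B-1.
A matrix M is a function nat => nat => real, with 0/1 entries for i<k, b<B,
zero outside that range, and every column summing to 1.\<close>

definition Mset :: "nat \<Rightarrow> nat \<Rightarrow> (nat \<Rightarrow> nat \<Rightarrow> real) set" where
  "Mset k B = {M. (\<forall>i b. M i b = 0 \<or> M i b = 1)
                 \<and> (\<forall>i b. (k \<le> i \<or> B \<le> b) \<longrightarrow> M i b = 0)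
                 \<and> (\<forall>b<B. (\<Sum>i<k. M i b) = 1)}"

definition ind :: "bool \<Rightarrow> real" where
  "ind P = (if P then 1 else 0)"

definition dM :: "nat \<Rightarrow> (nat \<Rightarrow> real) \<Rightarrow> nat \<Rightarrow> nat \<Rightarrow> (nat \<Rightarrow> nat \<Rightarrow> real) \<Rightarrow> real" where
  "dM B p istar j M = (\<Sum>b<B. p b * M istar b) - (\<Sum>b<B. p b * M j b)"

definition d0 :: "nat \<Rightarrow> (nat \<Rightarrow> real) \<Rightarrow> (nat \<Rightarrow> nat) \<Rightarrow> nat \<Rightarrow> nat \<Rightarrow> real" where
  "d0 B p ib istar j = (\<Sum>b<B. p b * ind (istar = ib b)) - (\<Sum>b<B. p b * ind (j = ib b))"

definition Iset :: "nat \<Rightarrow> nat \<Rightarrow> (nat \<Rightarrow> nat) \<Rightarrow> (nat \<Rightarrow> nat \<Rightarrow> real) \<Rightarrow> (nat \<times> nat) set" where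
  "Iset k B ib M = {(i, b). i < k \<and> b < B \<and> M i b = 1 \<and> i \<noteq> ib b}"

definition Aset :: "nat \<Rightarrow> nat \<Rightarrow> (nat \<Rightarrow> real) \<Rightarrow> nat \<Rightarrow> nat \<Rightarrow> (nat \<Rightarrow> nat \<Rightarrow> real) set" where
  "Aset k B p istar j = {M \<in> Mset k B. dM B p istar j M \<le> 0}"

definition Xi :: "nat \<Rightarrow> nat \<Rightarrow> (nat \<Rightarrow> nat) \<Rightarrow> nat \<Rightarrow> (nat \<times> nat) set" where
  "Xi k B ib istar = {(i, b). i < k \<and> b < B \<and> i \<noteq> istar \<and> i \<noteq> ib b}"

definition Xi_adv :: "nat \<Rightarrow> (nat \<Rightarrow> nat) \<Rightarrow> nat \<Rightarrow> (nat \<times> nat) set" where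
  "Xi_adv B ib istar = {(i, b). i = istar \<and> b < B \<and> ib b \<noteq> istar}"

definition vj :: "(nat \<Rightarrow> real) \<Rightarrow> (nat \<Rightarrow> nat) \<Rightarrow> nat \<Rightarrow> nat \<Rightarrow> nat \<times> nat \<Rightarrow> real" where
  "vj p ib istar j ib_pair = (case ib_pair of (i, b) \<Rightarrow>
      p b * (ind (j = i) - ind (j = ib b) - ind (istar = i) + ind (istar = ib b)))"

definition Atilde :: "nat \<Rightarrow> nat \<Rightarrow> (nat \<Rightarrow> real) \<Rightarrow> (nat \<Rightarrow> nat) \<Rightarrow> nat \<Rightarrow> nat \<Rightarrow> (nat \<Rightarrow> nat \<Rightarrow> real) set" where
  "Atilde k B p ib istar j = {M \<in> Mset k B.
     d0 B p ib istar j
       - (\<Sum>(i, b) \<in> Xi k B ib istar \<union> Xi_adv B ib istar. max (vj p ib istar j (i, b)) 0 * M i b) \<le> 0}"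

definition cost :: "nat \<Rightarrow> nat \<Rightarrow> (nat \<Rightarrow> nat) \<Rightarrow> (nat \<Rightarrow> nat \<Rightarrow> real) \<Rightarrow> (nat \<Rightarrow> nat \<Rightarrow> real) \<Rightarrow> real" where
  "cost k B ib G M = (\<Sum>(i, b) \<in> Iset k B ib M. G i b)"

end

theory Submission
  imports Defs
begin

lemma Iset_eq: "Iset k B ib M = {x \<in> {..<k} \<times> {..<B}. M (fst x) (snd x) = 1 \<and> fst x \<noteq> ib (snd x)}"
  unfolding Iset_def by auto

lemma sum_Iset:
  assumes M: "M \<in> Mset k B"
  shows "(\<Sum>(i, b) \<in> Iset k B ib M. f i b) = (\<Sum>b<B. \<Sum>i<k. M i b * (if i \<noteq> ib b then f i b else 0))"
proof -
  have "(\<Sum>(i, b) \<in> Iset k B ib M. f i b) = (\<Sum>x \<in> {..<k} \<times> {..<B}. if M (fst x) (snd x) = 1 \<and> fst x \<noteq> ib (snd x) then f (fst x) (snd x) else 0)"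
    unfolding Iset_eq by (subst sum.inter_filter[symmetric]) (auto simp: case_prod_beta)
  also have "\<dots> = (\<Sum>i<k. \<Sum>b<B. if M i b = 1 \<and> i \<noteq> ib b then f i b else 0)"
    by (subst sum.cartesian_product) (simp add: case_prod_beta)
  also have "\<dots> = (\<Sum>b<B. \<Sum>i<k. if M i b = 1 \<and> i \<noteq> ib b then f i b else 0)"
    by (rule sum.swap)
  also have "\<dots> = (\<Sum>b<B. \<Sum>i<k. M i b * (if i \<noteq> ib b then f i b else 0))"
  proof (intro sum.cong refl)
    fix b i
    have "M i b = 0 \<or> M i b = 1" using M unfolding Mset_def by auto
    then show "(if M i b = 1 \<and> i \<noteq> ib b then f i b else 0) = M i b * (if i \<noteq> ib b then f i b else 0)"
      by auto
  qed
  finally show ?thesis .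
qed

lemma dM_eq:
  assumes M: "M \<in> Mset k B" and istar: "istar < k" and j: "j < k"
  shows "dM B p istar j M = d0 B p ib istar j - (\<Sum>(i, b) \<in> Iset k B ib M. vj p ib istar j (i, b))"
proof -
  have col: "\<And>b. b < B \<Longrightarrow> (\<Sum>i<k. M i b) = 1" using M unfolding Mset_def by auto
  have e1: "M c b = (\<Sum>i<k. M i b * ind (c = i))" if "c < k" for b c
  proof -
    have "(\<Sum>i<k. M i b * ind (c = i)) = (\<Sum>i<k. if c = i then M i b else 0)"
      by (rule sum.cong) (auto simp: ind_def)
    then show ?thesis using that by simp
  qed
  have e2: "\<And>b c. b < B \<Longrightarrow> ind (c = ib b) = (\<Sum>i<k. M i b * ind (c = ib b))"
    using col by (simp add: sum_distrib_right[symmetric])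
  have "dM B p istar j M - d0 B p ib istar j
      = (\<Sum>b<B. p b * (M istar b - M j b - ind (istar = ib b) + ind (j = ib b)))"
    unfolding dM_def d0_def by (simp add: algebra_simps sum_subtractf sum.distrib)
  also have "\<dots> = (\<Sum>b<B. \<Sum>i<k. - (M i b * vj p ib istar j (i, b)))"
  proof (rule sum.cong[OF refl])
    fix b assume b: "b \<in> {..<B}"
    have "p b * (M istar b - M j b - ind (istar = ib b) + ind (j = ib b))
       = p b * ((\<Sum>i<k. M i b * ind (istar = i)) - (\<Sum>i<k. M i b * ind (j = i))
           - (\<Sum>i<k. M i b * ind (istar = ib b)) + (\<Sum>i<k. M i b * ind (j = ib b)))"
      using e1[OF istar, of b] e1[OF j, of b] e2[of b istar] e2[of b j] b by simp
    also have "\<dots> = (\<Sum>i<k. - (M i b * vj p ib istar j (i, b)))"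
      by (simp add: vj_def sum_subtractf[symmetric] sum.distrib[symmetric] sum_distrib_left algebra_simps)
    finally show "p b * (M istar b - M j b - ind (istar = ib b) + ind (j = ib b)) = (\<Sum>i<k. - (M i b * vj p ib istar j (i, b)))" .
  qed
  also have "\<dots> = - (\<Sum>(i, b) \<in> Iset k B ib M. vj p ib istar j (i, b))"
    unfolding sum_Iset[OF M]
    by (simp add: sum_negf[symmetric], intro sum.cong refl) (auto simp: vj_def ind_def)
  finally show ?thesis by simp
qed

lemma Xi_union: "istar < k \<Longrightarrow> Xi k B ib istar \<union> Xi_adv B ib istar = {(i, b). i < k \<and> b < B \<and> i \<noteq> ib b}"
  unfolding Xi_def Xi_adv_def by auto

lemma finite_Iset: "finite (Iset k B ib M)"
  by (rule finite_subset[of _ "{..<k} \<times> {..<B}"]) (auto simp: Iset_def)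

lemma tilde_sum:
  assumes M: "M \<in> Mset k B" and istar: "istar < k"
  shows "(\<Sum>(i, b) \<in> Xi k B ib istar \<union> Xi_adv B ib istar. max (vj p ib istar j (i, b)) 0 * M i b)
       = (\<Sum>(i, b) \<in> Iset k B ib M. max (vj p ib istar j (i, b)) 0)"
  unfolding Xi_union[OF istar]
proof (rule sum.mono_neutral_cong_right)
  show "finite {(i, b). i < k \<and> b < B \<and> i \<noteq> ib b}"
    by (rule finite_subset[of _ "{..<k} \<times> {..<B}"]) auto
  show "Iset k B ib M \<subseteq> {(i, b). i < k \<and> b < B \<and> i \<noteq> ib b}" by (auto simp: Iset_def)
  have M01: "M i b = 0 \<or> M i b = 1" for i b using M unfolding Mset_def by auto
  then show "\<forall>x\<in>{(i, b). i < k \<and> b < B \<and> i \<noteq> ib b} - Iset k B ib M.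
       (case x of (i, b) \<Rightarrow> max (vj p ib istar j (i, b)) 0 * M i b) = 0"
    by (auto simp: Iset_def) (metis M01)
  show "(case x of (i, b) \<Rightarrow> max (vj p ib istar j (i, b)) 0 * M i b) =
         (case x of (i, b) \<Rightarrow> max (vj p ib istar j (i, b)) 0)" if "x \<in> Iset k B ib M" for x
    using that by (auto simp: Iset_def)
qed

lemma col_unique:
  assumes M: "M \<in> Mset k B" and "b < B" "i < k" "i' < k" "M i b = 1" "M i' b = 1"
  shows "i = i'"
proof (rule ccontr)
  assume ne: "i \<noteq> i'"
  have nn: "\<forall>x\<in>{..<k}. 0 \<le> M x b"
  proof
    fix x have "M x b = 0 \<or> M x b = 1" using M unfolding Mset_def by blast
    then show "0 \<le> M x b" by auto
  qed
  have "(\<Sum>x\<in>{i, i'}. M x b) \<le> (\<Sum>x<k. M x b)"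
    by (rule sum_mono2) (use assms nn in auto)
  also have "\<dots> = 1" using M assms unfolding Mset_def by auto
  finally show False using ne assms by simp
qed

lemma cost_finite: "finite (cost k B ib G ` X)"
proof (rule finite_subset)
  show "cost k B ib G ` X \<subseteq> (\<lambda>S. \<Sum>(i, b) \<in> S. G i b) ` Pow ({..<k} \<times> {..<B})"
    unfolding cost_def by (auto simp: Iset_def)
  show "finite ((\<lambda>S. \<Sum>(i, b) \<in> S. G i b) ` Pow ({..<k} \<times> {..<B}))" by simp
qed

lemma improve:
  assumes M: "M \<in> Atilde k B p ib istar j"
    and ibk: "\<forall>b<B. ib b < k" and istar: "istar < k" and j: "j < k"
    and G: "\<forall>i<k. \<forall>b<B. i \<noteq> ib b \<longrightarrow> G i b \<ge> 0"
  shows "\<exists>M' \<in> Aset k B p istar j. cost k B ib G M' \<le> cost k B ib G M"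
proof -
  have MM: "M \<in> Mset k B" using M unfolding Atilde_def by auto
  have M01: "M i b = 0 \<or> M i b = 1" for i b using MM unfolding Mset_def by auto
  define bad where "bad b = (\<exists>i<k. M i b = 1 \<and> i \<noteq> ib b \<and> vj p ib istar j (i, b) < 0)" for b
  define M' where "M' i b = (if b < B \<and> bad b then ind (i = ib b) else M i b)" for i b
  have M'M: "M' \<in> Mset k B"
  proof -
    have a: "M' i b = 0 \<or> M' i b = 1" for i b using M01[of i b] by (auto simp: M'_def ind_def)
    have b: "M' i b = 0" if "k \<le> i \<or> B \<le> b" for i b
      using that MM ibk unfolding Mset_def M'_def ind_def by auto
    have c: "(\<Sum>i<k. M' i b) = 1" if "b < B" for b
    proof (cases "bad b")
      case True
      have "(\<Sum>i<k. M' i b) = (\<Sum>i<k. if ib b = i then 1 else 0)"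
        by (rule sum.cong) (auto simp: M'_def ind_def True that)
      also have "\<dots> = 1" using ibk that by simp
      finally show ?thesis .
    next
      case False then show ?thesis using MM that unfolding Mset_def M'_def by auto
    qed
    show ?thesis unfolding Mset_def using a b c by blast
  qed
  have IM': "Iset k B ib M' = {x \<in> Iset k B ib M. vj p ib istar j x \<ge> 0}"
  proof (safe)
    fix i b assume "(i, b) \<in> Iset k B ib M'"
    then have h: "i < k" "b < B" "M' i b = 1" "i \<noteq> ib b" by (auto simp: Iset_def)
    then have nb: "\<not> bad b" by (auto simp: M'_def ind_def split: if_splits)
    then have "M i b = 1" using h by (auto simp: M'_def)
    then show "(i, b) \<in> Iset k B ib M" using h by (auto simp: Iset_def)
    show "vj p ib istar j (i, b) \<ge> 0" using nb h \<open>M i b = 1\<close> unfolding bad_def by force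
  next
    fix i b assume h: "(i, b) \<in> Iset k B ib M" "vj p ib istar j (i, b) \<ge> 0"
    then have h2: "i < k" "b < B" "M i b = 1" "i \<noteq> ib b" by (auto simp: Iset_def)
    have "\<not> bad b"
    proof
      assume "bad b"
      then obtain i' where "i' < k" "M i' b = 1" "vj p ib istar j (i', b) < 0" unfolding bad_def by auto
      with col_unique[OF MM h2(2) h2(1) this(1) h2(3) this(2)] h(2) show False by simp
    qed
    then show "(i, b) \<in> Iset k B ib M'" using h2 by (auto simp: Iset_def M'_def)
  qed
  have sub: "Iset k B ib M' \<subseteq> Iset k B ib M" using IM' by auto
  have "cost k B ib G M' \<le> cost k B ib G M"
    unfolding cost_def
    by (rule sum_mono2[OF finite_Iset sub]) (use G in \<open>auto simp: Iset_def\<close>)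
  moreover have "dM B p istar j M' \<le> 0"
  proof -
    have "(\<Sum>(i, b) \<in> Iset k B ib M'. vj p ib istar j (i, b)) = (\<Sum>(i, b) \<in> Iset k B ib M. max (vj p ib istar j (i, b)) 0)"
      by (rule sum.mono_neutral_cong_left[OF finite_Iset sub]) (auto simp: IM')
    then have "dM B p istar j M' = d0 B p ib istar j - (\<Sum>(i, b) \<in> Iset k B ib M. max (vj p ib istar j (i, b)) 0)"
      using dM_eq[OF M'M istar j, of p ib] by simp
    also have "\<dots> \<le> 0" using M tilde_sum[OF MM istar, where p=p and j=j and ib=ib] unfolding Atilde_def by auto
    finally show ?thesis .
  qed
  ultimately show ?thesis using M'M unfolding Aset_def by auto
qed

lemma A_sub:
  assumes istar: "istar < k" and j: "j < k"
  shows "Aset k B p istar j \<subseteq> Atilde k B p ib istar j"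
proof
  fix M assume M: "M \<in> Aset k B p istar j"
  then have MM: "M \<in> Mset k B" by (auto simp: Aset_def)
  have "(\<Sum>(i, b) \<in> Iset k B ib M. vj p ib istar j (i, b)) \<le> (\<Sum>(i, b) \<in> Iset k B ib M. max (vj p ib istar j (i, b)) 0)"
    by (rule sum_mono) auto
  then show "M \<in> Atilde k B p ib istar j"
    using M dM_eq[OF MM istar j, of p ib] tilde_sum[OF MM istar, where p=p and j=j and ib=ib]
    unfolding Aset_def Atilde_def by auto
qed

theorem mainTheorem8:
  fixes k B :: nat and p :: "nat \<Rightarrow> real" and ib :: "nat \<Rightarrow> nat" and istar j :: nat
    and G :: "nat \<Rightarrow> nat \<Rightarrow> real"
  assumes "k \<ge> 2"
    and "\<forall>b<B. p b \<ge> 0"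
    and "(\<Sum>b<B. p b) = 1"
    and "\<forall>b<B. ib b < k"
    and "istar < k"
    and "\<forall>i<k. i \<noteq> istar \<longrightarrow>
           (\<Sum>b<B. p b * ind (i = ib b)) < (\<Sum>b<B. p b * ind (istar = ib b))"
    and "j < k" and "j \<noteq> istar"
    and "\<forall>i<k. \<forall>b<B. i \<noteq> ib b \<longrightarrow> G i b \<ge> 0"
  shows "Min ((cost k B ib G) ` Aset k B p istar j)
           = Min ((cost k B ib G) ` Atilde k B p ib istar j)"
proof -
  define M0 where "M0 i b = (if b < B \<and> i = j then 1 else 0 :: real)" for i b
  have M0: "M0 \<in> Aset k B p istar j"
  proof -
    have "(\<Sum>i<k. M0 i b) = 1" if "b < B" for b
    proof -
      have "(\<Sum>i<k. M0 i b) = (\<Sum>i<k. if j = i then 1 else 0)"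
        by (rule sum.cong) (auto simp: M0_def that)
      then show ?thesis using assms(7) by simp
    qed
    then have "M0 \<in> Mset k B" unfolding Mset_def M0_def using assms(7) by auto
    moreover have "dM B p istar j M0 = - 1"
      unfolding dM_def M0_def using assms(8) assms(3) by simp
    ultimately show ?thesis unfolding Aset_def by auto
  qed
  let ?A = "(cost k B ib G) ` Aset k B p istar j"
  let ?T = "(cost k B ib G) ` Atilde k B p ib istar j"
  have sub: "?A \<subseteq> ?T" using A_sub[OF assms(5,7), where B=B and p=p and ib=ib] by auto
  have neA: "?A \<noteq> {}" using M0 by auto
  then have neT: "?T \<noteq> {}" using sub by auto
  have le1: "Min ?T \<le> Min ?A"
    using Min_antimono[OF sub neA cost_finite] .
  obtain M where M: "M \<in> Atilde k B p ib istar j" "Min ?T = cost k B ib G M"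
    using Min_in[OF cost_finite neT] by auto
  obtain M' where M': "M' \<in> Aset k B p istar j" "cost k B ib G M' \<le> cost k B ib G M"
    using improve[OF M(1) assms(4,5,7,9)] by auto
  have "Min ?A \<le> cost k B ib G M'" using M' by (intro Min_le[OF cost_finite]) auto
  then show ?thesis using le1 M M' by linarith
qed
end
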